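(* Let $\ell\ge 2$ and $n_1,\dots,n_\ell$ be positive integers, and let $G$ be the xor-product of the complete graphs $K_{n_1},\dots,K_{n_\ell}$. Then $\omega(G)\le n_1+\dots+n_\ell-\ell+1$.
   Context: The xor-product of graphs $G_1,\dots,G_\ell$ has vertex set $V(G_1)\times\dots\times V(G_\ell)$, two vertices $(g_1,\dots,g_\ell)$ and $(g'_1,\dots,g'_\ell)$ being adjacent iff the number of indices $i$ with $g_ig'_i\in E(G_i)$ is odd. $\omega$ denotes the clique number. *)

theory Defs
  imports Main
begin

type_synonym 'a graph = "'a set \<times> ('a \<Rightarrow> 'a \<Rightarrow> bool)"

definition verts :: "'a graph \<Rightarrow> 'a set" where "verts G = fst G"
definition adj :: "'a graph \<Rightarrow> 'a \<Rightarrow> 'a \<Rightarrow> bool" where "adj G = snd G"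

definition complete_graph :: "nat \<Rightarrow> nat graph" where
  "complete_graph n = ({0..<n}, \<lambda>x y. x \<noteq> y)"

definition xor_product :: "'a graph list \<Rightarrow> 'a list graph" where
  "xor_product Gs =
    ({v. length v = length Gs \<and> (\<forall>i<length Gs. v ! i \<in> verts (Gs ! i))},
     \<lambda>u v. odd (card {i. i < length Gs \<and> adj (Gs ! i) (u ! i) (v ! i)}))"

definition is_clique :: "'a graph \<Rightarrow> 'a set \<Rightarrow> bool" where
  "is_clique G C \<longleftrightarrow> C \<subseteq> verts G \<and> (\<forall>x\<in>C. \<forall>y\<in>C. x \<noteq> y \<longrightarrow> adj G x y)"

definition clique_number :: "'a graph \<Rightarrow> nat" where
  "clique_number G = Sup {card C | C. finite C \<and> is_clique G C}"

end

theory Submission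
  imports Defs
begin

lemma parity_sum:
  assumes "finite A" "\<forall>x\<in>A. odd (f x :: nat) \<longleftrightarrow> p"
  shows "odd (sum f A) \<longleftrightarrow> p \<and> odd (card A)"
  using assms by (induction A rule: finite_induct) auto

lemma card_filter_sum:
  assumes "finite A"
  shows "card {x\<in>A. P x} = (\<Sum>x\<in>A. if P x then 1 else (0::nat))"
  using sum.inter_filter[OF assms, of "\<lambda>_. 1::nat" P] by simp

lemma double_count:
  fixes l :: nat
  assumes "finite T"
  shows "(\<Sum>x\<in>T. card {i. i < l \<and> P x i}) = (\<Sum>i<l. card {x\<in>T. P x i})"
proof -
  have e1: "\<And>x. card {i. i < l \<and> P x i} = (\<Sum>i<l. if P x i then 1 else (0::nat))"
  proof -
    fix x
    have "{i. i < l \<and> P x i} = {i\<in>{..<l}. P x i}" by auto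
    then show "card {i. i < l \<and> P x i} = (\<Sum>i<l. if P x i then 1 else (0::nat))"
      using card_filter_sum[of "{..<l}" "P x", OF finite_lessThan] by metis
  qed
  have "(\<Sum>x\<in>T. card {i. i < l \<and> P x i}) = (\<Sum>x\<in>T. \<Sum>i<l. if P x i then 1 else (0::nat))"
    using e1 by simp
  also have "\<dots> = (\<Sum>i<l. \<Sum>x\<in>T. if P x i then 1 else (0::nat))"
    by (rule sum.swap)
  also have "\<dots> = (\<Sum>i<l. card {x\<in>T. P x i})"
    using card_filter_sum[OF assms] by simp
  finally show ?thesis .
qed

lemma symdiff_card:
  assumes "finite A" "finite B"
  shows "card ((A - B) \<union> (B - A)) + 2 * card (A \<inter> B) = card A + card B"
proof -
  have "card ((A - B) \<union> (B - A)) = card (A - B) + card (B - A)"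
    using assms by (intro card_Un_disjoint) auto
  moreover have "card (A - B) = card A - card (A \<inter> B)"
    using assms by (simp add: card_Diff_subset_Int)
  moreover have "card (B - A) = card B - card (A \<inter> B)"
    using assms by (metis Int_commute card_Diff_subset_Int finite_Int)
  moreover have "card (A \<inter> B) \<le> card A" "card (A \<inter> B) \<le> card B"
    using assms by (auto intro: card_mono)
  ultimately show ?thesis by simp
qed

lemma partition_card:
  assumes "finite T" "\<forall>x\<in>T. g x < (n::nat)"
  shows "card T = (\<Sum>a<n. card {x\<in>T. g x = a})"
proof -
  have "(\<Sum>a<n. sum (\<lambda>_. 1::nat) {x. x \<in> T \<and> g x = a}) = sum (\<lambda>_. 1) T"
    using assms by (intro sum.group) auto
  then show ?thesis by simp
qed

lemma card_split_l:
  "card {i. i < l \<and> P i} + card {i. i < (l::nat) \<and> \<not> P i} = l"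
proof -
  have "card ({i. i < l \<and> P i} \<union> {i. i < l \<and> \<not> P i}) = card {i. i < l \<and> P i} + card {i. i < l \<and> \<not> P i}"
    by (intro card_Un_disjoint) auto
  moreover have "{i. i < l \<and> P i} \<union> {i. i < l \<and> \<not> P i} = {..<l}" by auto
  ultimately show ?thesis by simp
qed

lemma even_zero_term:
  assumes "finite A" "(0::nat) \<in> A" "even (sum f A)" "\<forall>a\<in>A-{0}. even (f a :: nat)"
  shows "even (f 0)"
proof -
  have "sum f A = f 0 + sum f (A - {0})" using assms by (simp add: sum.remove)
  moreover have "even (sum f (A - {0}))" using assms(4) by (intro dvd_sum) auto
  ultimately show ?thesis using assms(3) by simp
qed

lemma key:
  fixes l :: nat
  assumes fin: "finite T" and ne: "T \<noteq> {}" and ev: "even (card T)"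
    and cl: "\<forall>x\<in>T. \<forall>y\<in>T. x \<noteq> y \<longrightarrow> odd (card {i. i < l \<and> x ! i \<noteq> y ! i})"
    and cnt: "\<forall>i<l. \<forall>a. even (card {x\<in>T. x ! i = a})"
  shows False
proof -
  obtain y where y: "y \<in> T" using ne by blast
  have "(\<Sum>x\<in>T. card {i. i < l \<and> x ! i = y ! i}) = (\<Sum>i<l. card {x\<in>T. x ! i = y ! i})"
    using double_count[OF fin, of l "\<lambda>x i. x ! i = y ! i"] by simp
  moreover have "even (\<Sum>i<l. card {x\<in>T. x ! i = y ! i})"
    using cnt by (intro dvd_sum) auto
  ultimately have E: "even (\<Sum>x\<in>T. card {i. i < l \<and> x ! i = y ! i})" by simp
  have split: "(\<Sum>x\<in>T. card {i. i < l \<and> x ! i = y ! i}) = l + (\<Sum>x\<in>T-{y}. card {i. i < l \<and> x ! i = y ! i})"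
    using fin y by (simp add: sum.remove)
  have par: "\<forall>x\<in>T-{y}. odd (card {i. i < l \<and> x ! i = y ! i}) \<longleftrightarrow> even l"
  proof
    fix x assume x: "x \<in> T - {y}"
    have "odd (card {i. i < l \<and> x ! i \<noteq> y ! i})" using cl x y by auto
    moreover have "card {i. i < l \<and> x ! i = y ! i} + card {i. i < l \<and> x ! i \<noteq> y ! i} = l"
      using card_split_l[of l "\<lambda>i. x ! i = y ! i"] by simp
    ultimately show "odd (card {i. i < l \<and> x ! i = y ! i}) \<longleftrightarrow> even l"
      by (metis even_add)
  qed
  have "card T > 0" using fin ne by (simp add: card_gt_0_iff)
  then have "odd (card T - 1)" using ev by (cases "card T") auto
  then have "odd (card (T - {y}))" using fin y by (simp add: card_Diff_singleton)
  then have "odd (\<Sum>x\<in>T-{y}. card {i. i < l \<and> x ! i = y ! i}) \<longleftrightarrow> even l"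
    using parity_sum[OF _ par] fin by simp
  then show False using E split by simp
qed

lemma par_helper:
  fixes a b c d :: nat
  assumes "a + 2 * b = c + d" "odd c \<longleftrightarrow> odd d"
  shows "even a"
  using assms by presburger

lemma inj_step:
  fixes l :: nat and ns :: "nat list"
  assumes finC: "finite C"
    and V: "\<forall>v\<in>C. \<forall>i<l. v ! i < ns ! i"
    and pos: "\<forall>i<l. ns ! i > 0"
    and cl: "\<forall>x\<in>C. \<forall>y\<in>C. x \<noteq> y \<longrightarrow> odd (card {i. i < l \<and> x ! i \<noteq> y ! i})"
    and E1: "E1 \<subseteq> C" "even (card E1)"
    and E2: "E2 \<subseteq> C" "even (card E2)"
    and eq: "\<forall>i<l. \<forall>a. 0 < a \<and> a < ns ! i \<longrightarrow>
               (odd (card {x\<in>E1. x ! i = a}) \<longleftrightarrow> odd (card {x\<in>E2. x ! i = a}))"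
  shows "E1 = E2"
proof (rule ccontr)
  assume neq: "E1 \<noteq> E2"
  define T where "T = (E1 - E2) \<union> (E2 - E1)"
  have f1: "finite E1" "finite E2" using E1 E2 finC finite_subset by auto
  have finT: "finite T" using f1 T_def by simp
  have TC: "T \<subseteq> C" using E1 E2 T_def by auto
  have neT: "T \<noteq> {}" using neq T_def by auto
  have "card T + 2 * card (E1 \<inter> E2) = card E1 + card E2"
    unfolding T_def using f1 by (rule symdiff_card)
  then have evT: "even (card T)" using E1 E2 par_helper by blast
  have gen: "even (card {x\<in>T. x ! i = a})" if i: "i < l" and a: "0 < a" for i a
  proof (cases "a < ns ! i")
    case True
    have "{x\<in>T. x ! i = a} = ({x\<in>E1. x ! i = a} - {x\<in>E2. x ! i = a}) \<union> ({x\<in>E2. x ! i = a} - {x\<in>E1. x ! i = a})"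
      unfolding T_def by auto
    moreover have "{x\<in>E1. x ! i = a} \<inter> {x\<in>E2. x ! i = a} = {x\<in>E1 \<inter> E2. x ! i = a}" by auto
    ultimately have "card {x\<in>T. x ! i = a} + 2 * card {x\<in>E1 \<inter> E2. x ! i = a}
        = card {x\<in>E1. x ! i = a} + card {x\<in>E2. x ! i = a}"
      using symdiff_card[of "{x\<in>E1. x ! i = a}" "{x\<in>E2. x ! i = a}"] f1 by simp
    moreover have "odd (card {x\<in>E1. x ! i = a}) \<longleftrightarrow> odd (card {x\<in>E2. x ! i = a})"
      using eq i a True by blast
    ultimately show ?thesis by (rule par_helper)
  next
    case False
    have "\<forall>x\<in>T. x ! i < ns ! i" using TC V i by blast
    then have "{x\<in>T. x ! i = a} = {}" using False by auto
    then show ?thesis by (metis card.empty dvd_0_right)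
  qed
  have cnt: "\<forall>i<l. \<forall>a. even (card {x\<in>T. x ! i = a})"
  proof (intro allI impI)
    fix i a assume i: "i < l"
    show "even (card {x\<in>T. x ! i = a})"
    proof (cases "a = 0")
      case False then show ?thesis using gen i by simp
    next
      case True
      have "card T = (\<Sum>a<ns ! i. card {x\<in>T. x ! i = a})"
        using partition_card[OF finT, of "\<lambda>x. x ! i" "ns ! i"] TC V i by auto
      then have "even (\<Sum>a<ns ! i. card {x\<in>T. x ! i = a})" using evT by simp
      moreover have "(0::nat) \<in> {..<ns ! i}" using pos i by simp
      ultimately have "even (card {x\<in>T. x ! i = 0})"
        using even_zero_term[of "{..<ns ! i}" "\<lambda>a. card {x\<in>T. x ! i = a}"] gen i by auto
      then show ?thesis using True by simp
    qed
  qed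
  have clT: "\<forall>x\<in>T. \<forall>y\<in>T. x \<noteq> y \<longrightarrow> odd (card {i. i < l \<and> x ! i \<noteq> y ! i})"
    using cl TC by blast
  show False using key[OF finT neT evT clT cnt] .
qed

lemma bound_abstract:
  fixes l :: nat and ns :: "nat list"
  assumes finC: "finite C"
    and V: "\<forall>v\<in>C. \<forall>i<l. v ! i < ns ! i"
    and pos: "\<forall>i<l. ns ! i > 0"
    and cl: "\<forall>x\<in>C. \<forall>y\<in>C. x \<noteq> y \<longrightarrow> odd (card {i. i < l \<and> x ! i \<noteq> y ! i})"
    and l: "l = length ns"
  shows "card C \<le> sum_list ns - l + 1"
proof (cases "C = {}")
  case True then show ?thesis by simp
next
  case False
  then obtain x0 where x0: "x0 \<in> C" by blast
  define ev where "ev S = (if even (card S) then S else insert x0 S)" for S :: "nat list set"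
  define P' where "P' = (SIGMA i:{..<l}. {1..<ns ! i})"
  define h where "h S = {p\<in>P'. odd (card {x\<in>ev S. x ! fst p = snd p})}" for S
  have evprops: "ev S \<subseteq> C \<and> even (card (ev S)) \<and> ev S - {x0} = S" if S: "S \<subseteq> C - {x0}" for S
  proof -
    have fS: "finite S" using S finC finite_subset by blast
    have nx: "x0 \<notin> S" using S by blast
    show ?thesis
    proof (cases "even (card S)")
      case True
      then show ?thesis using S nx unfolding ev_def by auto
    next
      case False
      have "card (insert x0 S) = Suc (card S)" using fS nx by simp
      then show ?thesis using S nx x0 False unfolding ev_def by auto
    qed
  qed
  have inj: "inj_on h (Pow (C - {x0}))"
  proof (rule inj_onI)
    fix S1 S2 assume S1: "S1 \<in> Pow (C - {x0})" and S2: "S2 \<in> Pow (C - {x0})" and hh: "h S1 = h S2"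
    have S1': "S1 \<subseteq> C - {x0}" using S1 by blast
    have S2': "S2 \<subseteq> C - {x0}" using S2 by blast
    have e1: "ev S1 \<subseteq> C" "even (card (ev S1))" "ev S1 - {x0} = S1" using evprops[OF S1'] by blast+
    have e2: "ev S2 \<subseteq> C" "even (card (ev S2))" "ev S2 - {x0} = S2" using evprops[OF S2'] by blast+
    have eq: "\<forall>i<l. \<forall>a. 0 < a \<and> a < ns ! i \<longrightarrow>
               (odd (card {x\<in>ev S1. x ! i = a}) \<longleftrightarrow> odd (card {x\<in>ev S2. x ! i = a}))"
    proof (intro allI impI)
      fix i a assume i: "i < l" and a: "0 < a \<and> a < ns ! i"
      have "(i, a) \<in> P'" using i a unfolding P'_def by auto
      then have "(i, a) \<in> h S1 \<longleftrightarrow> odd (card {x\<in>ev S1. x ! i = a})"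
            "(i, a) \<in> h S2 \<longleftrightarrow> odd (card {x\<in>ev S2. x ! i = a})"
        unfolding h_def by simp_all
      then show "odd (card {x\<in>ev S1. x ! i = a}) \<longleftrightarrow> odd (card {x\<in>ev S2. x ! i = a})"
        using hh by blast
    qed
    have "ev S1 = ev S2" using inj_step[OF finC V pos cl e1(1,2) e2(1,2) eq] .
    then show "S1 = S2" using e1(3) e2(3) by metis
  qed
  have sub: "h ` Pow (C - {x0}) \<subseteq> Pow P'" unfolding h_def by blast
  have finP: "finite P'" unfolding P'_def by (intro finite_SigmaI) auto
  have "card (Pow (C - {x0})) \<le> card (Pow P')"
    using card_inj_on_le[OF inj sub] finP by simp
  then have "(2::nat) ^ (card C - 1) \<le> 2 ^ card P'"
    using finC finP x0 by (simp add: card_Pow card_Diff_singleton)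
  moreover have "(1::nat) < 2" by simp
  ultimately have le: "card C - 1 \<le> card P'" using power_le_imp_le_exp by blast
  have "card P' = (\<Sum>i<l. card {1..<ns ! i})" unfolding P'_def by simp
  also have "\<dots> = (\<Sum>i<l. ns ! i - 1)" by simp
  also have "\<dots> = (\<Sum>i<l. ns ! i) - (\<Sum>i<l. 1)"
    using pos by (intro sum_subtractf_nat) (simp add: Suc_leI)
  also have "(\<Sum>i<l. ns ! i) = sum_list ns"
    using l by (simp add: sum_list_sum_nth atLeast0LessThan)
  finally have "card P' = sum_list ns - l" by simp
  then show ?thesis using le by simp
qed

theorem theorem3p1:
  fixes ns :: "nat list"
  assumes "length ns \<ge> 2"
    and "\<forall>n\<in>set ns. n > 0"
  shows "clique_number (xor_product (map complete_graph ns)) \<le> sum_list ns - length ns + 1"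
proof -
  let ?G = "xor_product (map complete_graph ns)"
  let ?l = "length ns"
  have pos: "\<forall>i<?l. ns ! i > 0" using assms(2) by simp
  have each: "card C \<le> sum_list ns - ?l + 1" if fC: "finite C" and cC: "is_clique ?G C" for C
  proof -
    have vG: "verts ?G = {v. length v = ?l \<and> (\<forall>i<?l. v ! i < ns ! i)}"
      unfolding xor_product_def verts_def complete_graph_def by auto
    have aG: "adj ?G x y = odd (card {i. i < ?l \<and> x ! i \<noteq> y ! i})" for x y
    proof -
      have "{i. i < length (map complete_graph ns) \<and> adj (map complete_graph ns ! i) (x ! i) (y ! i)}
          = {i. i < ?l \<and> x ! i \<noteq> y ! i}"
        unfolding adj_def complete_graph_def by auto
      then show ?thesis unfolding xor_product_def adj_def[of "(_, _)"] by simp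
    qed
    have V: "\<forall>v\<in>C. \<forall>i<?l. v ! i < ns ! i" using cC vG unfolding is_clique_def by auto
    have cl: "\<forall>x\<in>C. \<forall>y\<in>C. x \<noteq> y \<longrightarrow> odd (card {i. i < ?l \<and> x ! i \<noteq> y ! i})"
      using cC aG unfolding is_clique_def by auto
    show ?thesis using bound_abstract[OF fC V pos cl refl] .
  qed
  have "is_clique ?G {}" unfolding is_clique_def by simp
  then have "card {} \<in> {card C | C. finite C \<and> is_clique ?G C}"
    by (intro CollectI exI[of _ "{}"]) simp
  then have ne: "{card C | C. finite C \<and> is_clique ?G C} \<noteq> {}" by blast
  show ?thesis unfolding clique_number_def
    by (rule cSup_least[OF ne]) (use each in blast)
qed

end
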